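(* Let $B \in \mathbb{R}^{r \times n}$ and $S \subseteq \mathbb{R}^n$, and let $\varphi_B \colon \mathbb{R}^n_+ \to \mathbb{R}^r_+$, $\varphi_B(x) = x^B$. The following are equivalent: (i) $\varphi_B$ is injective with respect to $S$; (ii) $\sigma(\ker(B)) \cap \sigma(S^* ) = \emptyset$.
   Context: $\mathbb{R}_+$ denotes the strictly positive reals. For $x\in\mathbb{R}^n_+$, $(x^B)_j=\prod_{i=1}^n x_i^{b_{ji}}$ (real exponents). A function $g$ on $\mathbb{R}^n_+$ is injective with respect to $S$ if $x,y\in\mathbb{R}^n_+$, $x\ne y$, $x-y\in S$ imply $g(x)\neq g(y)$. $S^*=S\setminus\{0\}$. $\sigma$ denotes the componentwise sign vector, and $\sigma(T)=\{\sigma(x)\mid x\in T\}$. *)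

theory Defs
  imports "HOL-Analysis.Analysis"
begin

definition pos_orthant :: "(real^'n) set" where
  "pos_orthant = {x. \<forall>i. x $ i > 0}"

definition monomial_map :: "real^'n^'r \<Rightarrow> real^'n \<Rightarrow> real^'r" where
  "monomial_map B x = (\<chi> j. \<Prod>i\<in>UNIV. (x $ i) powr (B $ j $ i))"

definition injective_wrt :: "(real^'n \<Rightarrow> 'b) \<Rightarrow> (real^'n) set \<Rightarrow> bool" where
  "injective_wrt g S \<longleftrightarrow>
     (\<forall>x\<in>pos_orthant. \<forall>y\<in>pos_orthant. x \<noteq> y \<longrightarrow> x - y \<in> S \<longrightarrow> g x \<noteq> g y)"

definition sign_vec :: "real^'n \<Rightarrow> real^'n" where
  "sign_vec x = (\<chi> i. sgn (x $ i))"

definition mat_ker :: "real^'n^'r \<Rightarrow> (real^'n) set" where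
  "mat_ker B = {v. B *v v = 0}"

end

theory Submission
  imports Defs
begin

definition Lg :: "real^'n \<Rightarrow> real^'n" where "Lg x = (\<chi> i. ln (x $ i))"

lemma ln_mono_map:
  assumes "x \<in> pos_orthant"
  shows "ln (monomial_map B x $ j) = (B *v Lg x) $ j"
proof -
  have p: "\<And>i. x $ i > 0" using assms by (auto simp: pos_orthant_def)
  have "ln (monomial_map B x $ j) = ln (\<Prod>i\<in>UNIV. (x $ i) powr (B $ j $ i))"
    by (simp add: monomial_map_def)
  also have "\<dots> = (\<Sum>i\<in>UNIV. ln ((x $ i) powr (B $ j $ i)))"
    using p by (subst ln_prod) (auto, metis less_irrefl)
  also have "\<dots> = (\<Sum>i\<in>UNIV. B $ j $ i * ln (x $ i))"
    using p by (simp add: ln_powr)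
  finally show ?thesis by (simp add: matrix_vector_mult_def Lg_def)
qed

lemma mono_pos:
  assumes "x \<in> pos_orthant"
  shows "monomial_map B x $ j > 0"
  using assms unfolding monomial_map_def pos_orthant_def
  by (simp, intro prod_pos ballI, simp add: order.strict_iff_order[symmetric] powr_gt_zero)
     (metis less_irrefl)

lemma mono_eq:
  assumes "x \<in> pos_orthant" "y \<in> pos_orthant"
  shows "monomial_map B x = monomial_map B y \<longleftrightarrow> B *v (Lg x - Lg y) = 0"
proof -
  have "monomial_map B x = monomial_map B y \<longleftrightarrow>
        (\<forall>j. ln (monomial_map B x $ j) = ln (monomial_map B y $ j))"
    using mono_pos[OF assms(1), of B] mono_pos[OF assms(2), of B]
    by (metis vec_eq_iff ln_inj_iff)
  also have "\<dots> \<longleftrightarrow> (\<forall>j. (B *v Lg x) $ j = (B *v Lg y) $ j)"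
    using ln_mono_map[OF assms(1), of B] ln_mono_map[OF assms(2), of B] by simp
  also have "\<dots> \<longleftrightarrow> B *v (Lg x - Lg y) = 0"
    by (simp add: matrix_vector_mult_diff_distrib vec_eq_iff)
  finally show ?thesis .
qed

lemma sgn_ln: "(a::real) > 0 \<Longrightarrow> b > 0 \<Longrightarrow> sgn (ln a - ln b) = sgn (a - b)"
  by (cases a b rule: linorder_cases) (auto simp: sgn_if)

theorem mainTheorem7:
  fixes B :: "real^'n^'r" and S :: "(real^'n) set"
  shows "injective_wrt (monomial_map B) S \<longleftrightarrow>
         sign_vec ` (mat_ker B) \<inter> sign_vec ` (S - {0}) = {}"
proof
  assume inj: "injective_wrt (monomial_map B) S"
  show "sign_vec ` (mat_ker B) \<inter> sign_vec ` (S - {0}) = {}"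
  proof (rule ccontr)
    assume "\<not> ?thesis"
    then obtain v s where v: "B *v v = 0" and s: "s \<in> S" "s \<noteq> 0"
      and sv: "sign_vec v = sign_vec s" by (auto simp: mat_ker_def)
    have sg: "\<And>i. sgn (v $ i) = sgn (s $ i)" using sv by (simp add: sign_vec_def vec_eq_iff)
    define y :: "real^'n" where "y = (\<chi> i. if s $ i = 0 then 1 else s $ i / (exp (v $ i) - 1))"
    define x :: "real^'n" where "x = (\<chi> i. y $ i * exp (v $ i))"
    have ypos: "\<And>i. y $ i > 0"
    proof -
      fix i
      show "y $ i > 0"
      proof (cases "s $ i = 0")
        case False
        then have "(s $ i > 0 \<and> v $ i > 0) \<or> (s $ i < 0 \<and> v $ i < 0)"
          using sg[of i] by (cases "s $ i > 0"; cases "v $ i > 0"; cases "v $ i = 0"; simp add: sgn_if split: if_splits)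
        then show ?thesis
        proof
          assume h: "s $ i > 0 \<and> v $ i > 0"
          then have "exp (v $ i) - 1 > 0" by simp
          then show ?thesis using h False by (simp add: y_def)
        next
          assume h: "s $ i < 0 \<and> v $ i < 0"
          then have "exp (v $ i) - 1 < 0" by simp
          then show ?thesis using h False by (simp add: y_def divide_neg_neg)
        qed
      qed (simp add: y_def)
    qed
    have yp: "y \<in> pos_orthant" using ypos by (simp add: pos_orthant_def)
    have xp: "x \<in> pos_orthant" using ypos by (simp add: pos_orthant_def x_def)
    have d: "x - y = s"
    proof (subst vec_eq_iff, rule allI)
      fix i
      show "(x - y) $ i = s $ i"
      proof (cases "s $ i = 0")
        case True
        then have "v $ i = 0" using sg[of i] by (simp add: sgn_if split: if_splits)
        then show ?thesis using True by (simp add: x_def y_def)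
      next
        case False
        then have "v $ i \<noteq> 0" using sg[of i] by (auto simp: sgn_if split: if_splits)
        then have "exp (v $ i) - 1 \<noteq> 0" by simp
        then have e: "exp (v $ i) - 1 \<noteq> 0" by simp
        have "y $ i * exp (v $ i) - y $ i = y $ i * (exp (v $ i) - 1)" by (simp add: algebra_simps)
        also have "\<dots> = s $ i" using False e by (simp add: y_def)
        finally have "y $ i * exp (v $ i) - y $ i = s $ i" .
        then show ?thesis by (simp add: x_def)
      qed
    qed
    have "Lg x - Lg y = v"
      using ypos by (simp add: vec_eq_iff Lg_def x_def ln_mult) (metis less_irrefl)
    then have "monomial_map B x = monomial_map B y" using mono_eq[OF xp yp, of B] v by simp
    moreover have "x \<noteq> y" using d s by auto
    ultimately show False using inj xp yp d s unfolding injective_wrt_def by blast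
  qed
next
  assume dis: "sign_vec ` (mat_ker B) \<inter> sign_vec ` (S - {0}) = {}"
  show "injective_wrt (monomial_map B) S"
    unfolding injective_wrt_def
  proof (intro ballI impI notI)
    fix x y assume xp: "x \<in> pos_orthant" and yp: "y \<in> pos_orthant" and ne: "x \<noteq> y"
      and xy: "x - y \<in> S" and eq: "monomial_map B x = monomial_map B y"
    have k: "Lg x - Lg y \<in> mat_ker B" using mono_eq[OF xp yp, of B] eq by (simp add: mat_ker_def)
    have "sign_vec (Lg x - Lg y) = sign_vec (x - y)"
      using xp yp by (simp add: sign_vec_def vec_eq_iff Lg_def pos_orthant_def sgn_ln)
    moreover have "x - y \<in> S - {0}" using xy ne by simp
    ultimately show False using dis k by blast
  qed
qed

end
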